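(* Let $\mathcal{L}$ be a set of graphs of sort $\emptyset$, let $\tau\subseteq\mathbb{S}$ be finite and let $G_1,G_2$ be graphs of sort included in $\tau$. Then $G_1\cong^{\mathbf{G}}_{\mathcal{L}}G_2$ iff $G_1\cong^{\mathbf{G}^\tau}_{\mathcal{L}}G_2$.
   Context: Graphs over a countably infinite set $\mathbb{S}$ of source labels and a set $\mathbb{A}$ of edge labels: isomorphism classes of finite $\mathbb{A}$-labelled hypergraphs with an injective map from a finite sort into the vertices (sources). The HR algebra $\mathbf{G}$: sorts the finite subsets of $\mathbb{S}$; operations $\mathbf{0}_\sigma$, $\mathbf{a}_{(s_1,\ldots)}$, $\mathsf{restrict}_\sigma$ (forget source labels outside $\sigma$, keep vertices), $\mathsf{rename}_\alpha$ ($\alpha$ finite permutation of $\mathbb{S}$, relabelling sources), $\parallel$ (disjoint union fusing equally-labelled sources). $\mathbf{G}^\tau$: subalgebra with sorts the subsets of $\tau$, universe the graphs of sort $\subseteq\tau$, and operations $\mathbf{0}_\sigma$ ($\sigma\subseteq\tau$), $\mathbf{a}_{(s_1,\ldots)}$ ($s_i\in\tau$), $\mathsf{restrict}_\sigma$ ($\sigma\subseteq\tau$), $\mathsf{rename}_\alpha$ ($\alpha$ fixing all elements outside $\tau$), $\parallel$. The syntactic congruence $\cong^{\mathbf{A}}_{\mathcal{L}}$ in an algebra $\mathbf{A}$ relates elements $a,b$ of $\mathbf{A}$ iff they have the same sort and for every first-order term $t(x,y_1,\ldots,y_k)$ over the signature of $\mathbf{A}$ and all elements $c_i$ of $\mathbf{A}$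 of matching sorts, $t^{\mathbf{A}}(a,\bar c)\in\mathcal{L}\iff t^{\mathbf{A}}(b,\bar c)\in\mathcal{L}$. *)

theory Defs
  imports Main "HOL-Library.Countable"
begin

text \<open>A graph (in the paper: an
isomorphism class) is represented by a raw graph with vertices and hyperedges
drawn from nat; languages are required to be closed under isomorphism.\<close>

record ('s, 'a) sgraph =
  verts :: "nat set"
  edges :: "nat set"
  lab   :: "nat \<Rightarrow> 'a"
  att   :: "nat \<Rightarrow> nat list"
  src   :: "'s \<Rightarrow> nat option"

definition gsort :: "('s, 'a) sgraph \<Rightarrow> 's set" where
  "gsort G = dom (src G)"

definition wf_graph :: "('s, 'a) sgraph \<Rightarrow> bool" where
  "wf_graph G \<longleftrightarrow> finite (verts G) \<and> finite (edges G)
     \<and> (\<forall>e\<in>edges G. set (att G e) \<subseteq> verts G)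
     \<and> finite (dom (src G)) \<and> ran (src G) \<subseteq> verts G
     \<and> inj_on (src G) (dom (src G))"

definition graph_iso :: "('s, 'a) sgraph \<Rightarrow> ('s, 'a) sgraph \<Rightarrow> bool" where
  "graph_iso G H \<longleftrightarrow> (\<exists>f g. bij_betw f (verts G) (verts H) \<and> bij_betw g (edges G) (edges H)
     \<and> (\<forall>e\<in>edges G. lab H (g e) = lab G e \<and> att H (g e) = map f (att G e))
     \<and> (\<forall>s. src H s = map_option f (src G s)))"

definition iso_closed :: "('s, 'a) sgraph set \<Rightarrow> bool" where
  "iso_closed L \<longleftrightarrow> (\<forall>G H. G \<in> L \<and> graph_iso G H \<longrightarrow> H \<in> L)"

definition g_zero :: "'s::countable set \<Rightarrow> ('s, 'a) sgraph" where
  "g_zero \<sigma> = \<lparr>verts = to_nat ` \<sigma>, edges = {}, lab = (\<lambda>_. undefined), att = (\<lambda>_. []),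
     src = (\<lambda>s. if s \<in> \<sigma> then Some (to_nat s) else None)\<rparr>"

definition g_edge :: "'a \<Rightarrow> 's::countable list \<Rightarrow> ('s, 'a) sgraph" where
  "g_edge a ss = \<lparr>verts = to_nat ` set ss, edges = {0}, lab = (\<lambda>_. a),
     att = (\<lambda>_. map to_nat ss),
     src = (\<lambda>s. if s \<in> set ss then Some (to_nat s) else None)\<rparr>"

definition g_restrict :: "'s set \<Rightarrow> ('s, 'a) sgraph \<Rightarrow> ('s, 'a) sgraph" where
  "g_restrict \<sigma> G = G\<lparr>src := src G |` \<sigma>\<rparr>"

definition g_rename :: "('s \<Rightarrow> 's) \<Rightarrow> ('s, 'a) sgraph \<Rightarrow> ('s, 'a) sgraph" where
  "g_rename \<alpha> G = G\<lparr>src := src G \<circ> inv \<alpha>\<rparr>"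

text \<open>Parallel composition: disjoint union (G on even, H on odd numbers), where a source
vertex of H whose label is also a source label of G is fused with that source of G.\<close>

definition par_vmap :: "('s, 'a) sgraph \<Rightarrow> ('s, 'a) sgraph \<Rightarrow> nat \<Rightarrow> nat" where
  "par_vmap G H v =
     (if \<exists>s. s \<in> dom (src G) \<and> src H s = Some v
      then 2 * the (src G (SOME s. s \<in> dom (src G) \<and> src H s = Some v))
      else 2 * v + 1)"

definition g_par :: "('s, 'a) sgraph \<Rightarrow> ('s, 'a) sgraph \<Rightarrow> ('s, 'a) sgraph" where
  "g_par G H = \<lparr>verts = (\<lambda>v. 2 * v) ` verts G \<union> par_vmap G H ` verts H,
     edges = (\<lambda>e. 2 * e) ` edges G \<union> (\<lambda>e. 2 * e + 1) ` edges H,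
     lab = (\<lambda>e. if even e then lab G (e div 2) else lab H (e div 2)),
     att = (\<lambda>e. if even e then map (\<lambda>v. 2 * v) (att G (e div 2))
               else map (par_vmap G H) (att H (e div 2))),
     src = (\<lambda>s. case src G s of Some v \<Rightarrow> Some (2 * v)
               | None \<Rightarrow> map_option (par_vmap G H) (src H s))\<rparr>"

definition finite_perm :: "('s \<Rightarrow> 's) \<Rightarrow> bool" where
  "finite_perm \<alpha> \<longleftrightarrow> bij \<alpha> \<and> finite {s. \<alpha> s \<noteq> s}"

datatype ('s, 'a) trm =
    TVar nat
  | TZero "'s set"
  | TEdge 'a "'s list"
  | TRestrict "'s set" "('s, 'a) trm"
  | TRename "'s \<Rightarrow> 's" "('s, 'a) trm"
  | TPar "('s, 'a) trm" "('s, 'a) trm"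

text \<open>Terms over the signature of \<open>G^\<tau>\<close>; the signature of \<open>G\<close> is the case \<open>\<tau> = UNIV\<close>.\<close>

fun trm_ok :: "'s set \<Rightarrow> ('s, 'a) trm \<Rightarrow> bool" where
  "trm_ok \<tau> (TVar i) = True"
| "trm_ok \<tau> (TZero \<sigma>) = (finite \<sigma> \<and> \<sigma> \<subseteq> \<tau>)"
| "trm_ok \<tau> (TEdge a ss) = (distinct ss \<and> set ss \<subseteq> \<tau>)"
| "trm_ok \<tau> (TRestrict \<sigma> t) = (finite \<sigma> \<and> \<sigma> \<subseteq> \<tau> \<and> trm_ok \<tau> t)"
| "trm_ok \<tau> (TRename \<alpha> t) = (finite_perm \<alpha> \<and> (\<forall>s. s \<notin> \<tau> \<longrightarrow> \<alpha> s = s) \<and> trm_ok \<tau> t)"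
| "trm_ok \<tau> (TPar t u) = (trm_ok \<tau> t \<and> trm_ok \<tau> u)"

fun eval :: "(nat \<Rightarrow> ('s::countable, 'a) sgraph) \<Rightarrow> ('s, 'a) trm \<Rightarrow> ('s, 'a) sgraph" where
  "eval \<rho> (TVar i) = \<rho> i"
| "eval \<rho> (TZero \<sigma>) = g_zero \<sigma>"
| "eval \<rho> (TEdge a ss) = g_edge a ss"
| "eval \<rho> (TRestrict \<sigma> t) = g_restrict \<sigma> (eval \<rho> t)"
| "eval \<rho> (TRename \<alpha> t) = g_rename \<alpha> (eval \<rho> t)"
| "eval \<rho> (TPar t u) = g_par (eval \<rho> t) (eval \<rho> u)"

text \<open>Syntactic congruence of \<open>L\<close> in the algebra with universe \<open>U\<close> and signature
restricted to \<open>\<tau>\<close>: variable 0 plays the role of \<open>x\<close>, the other variables the \<open>y_i\<close>.\<close>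

definition syn_cong :: "('s::countable, 'a) sgraph set \<Rightarrow> 's set \<Rightarrow> ('s, 'a) sgraph set
    \<Rightarrow> ('s, 'a) sgraph \<Rightarrow> ('s, 'a) sgraph \<Rightarrow> bool" where
  "syn_cong U \<tau> L a b \<longleftrightarrow> a \<in> U \<and> b \<in> U \<and> gsort a = gsort b \<and>
     (\<forall>t \<rho>. trm_ok \<tau> t \<and> (\<forall>i. \<rho> i \<in> U) \<longrightarrow>
        (eval (\<rho>(0 := a)) t \<in> L \<longleftrightarrow> eval (\<rho>(0 := b)) t \<in> L))"

definition G_cong :: "('s::countable, 'a) sgraph set \<Rightarrow> ('s, 'a) sgraph \<Rightarrow> ('s, 'a) sgraph \<Rightarrow> bool" where
  "G_cong L = syn_cong {G. wf_graph G} UNIV L"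

definition Gtau_cong :: "'s::countable set \<Rightarrow> ('s, 'a) sgraph set \<Rightarrow> ('s, 'a) sgraph \<Rightarrow> ('s, 'a) sgraph \<Rightarrow> bool" where
  "Gtau_cong \<tau> L = syn_cong {G. wf_graph G \<and> gsort G \<subseteq> \<tau>} \<tau> L"

end

theory Submission
  imports Defs
begin

lemma odd_neq: "(2::nat) * a \<noteq> 2 * b + 1" by presburger

lemma pv_fused:
  assumes "inj_on (src H) (dom (src H))" "src G s = Some a" "src H s = Some v"
  shows "par_vmap G H v = 2 * a"
proof -
  let ?P = "\<lambda>s. s \<in> dom (src G) \<and> src H s = Some v"
  have ex: "\<exists>s. ?P s" using assms by blast
  have "?P (SOME s. ?P s)" using someI_ex[OF ex] .
  moreover have "\<And>s'. ?P s' \<Longrightarrow> s' = s"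
  proof -
    fix s' assume "?P s'"
    then have "src H s' = src H s" "s' \<in> dom (src H)" "s \<in> dom (src H)" using assms by auto
    then show "s' = s" using inj_onD[OF assms(1)] by blast
  qed
  ultimately have "(SOME s. ?P s) = s" by blast
  then show ?thesis using ex assms(2) unfolding par_vmap_def by simp
qed

lemma pv_unfused:
  "\<not> (\<exists>s. s \<in> dom (src G) \<and> src H s = Some v) \<Longrightarrow> par_vmap G H v = 2 * v + 1"
  unfolding par_vmap_def by (rule if_not_P)

lemma pv_even_iff:
  assumes "inj_on (src H) (dom (src H))"
  shows "(2 * a = par_vmap G H v) \<longleftrightarrow> (\<exists>s. src G s = Some a \<and> src H s = Some v)"
proof
  assume h: "2 * a = par_vmap G H v"
  show "\<exists>s. src G s = Some a \<and> src H s = Some v"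
  proof (cases "\<exists>s. s \<in> dom (src G) \<and> src H s = Some v")
    case True
    then obtain s a' where "src G s = Some a'" "src H s = Some v" by blast
    with pv_fused[OF assms this] h show ?thesis by auto
  next
    case False
    have "2 * a = 2 * v + 1" using h pv_unfused[OF False] by simp
    with odd_neq show ?thesis by blast
  qed
next
  assume "\<exists>s. src G s = Some a \<and> src H s = Some v"
  then obtain s where "src G s = Some a" "src H s = Some v" by blast
  then show "2 * a = par_vmap G H v" using pv_fused[OF assms] by simp
qed

lemma pv_inj:
  assumes "inj_on (src G) (dom (src G))" "inj_on (src H) (dom (src H))"
    and "par_vmap G H v = par_vmap G H w"
  shows "v = w"
proof (cases "\<exists>s. s \<in> dom (src G) \<and> src H s = Some v")
  case True
  then obtain s a where s: "src G s = Some a" "src H s = Some v" by blast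
  show ?thesis
  proof (cases "\<exists>s. s \<in> dom (src G) \<and> src H s = Some w")
    case True
    then obtain s' a' where s': "src G s' = Some a'" "src H s' = Some w" by blast
    have "a = a'" using pv_fused[OF assms(2) s] pv_fused[OF assms(2) s'] assms(3) by linarith
    then have "src G s = src G s'" "s \<in> dom (src G)" "s' \<in> dom (src G)" using s s' by auto
    then have "s = s'" using inj_onD[OF assms(1)] by blast
    then show ?thesis using s s' by simp
  next
    case False
    have "2 * a = 2 * w + 1" using pv_fused[OF assms(2) s] pv_unfused[OF False] assms(3) by linarith
    with odd_neq show ?thesis by blast
  qed
next
  case False
  note F = this
  show ?thesis
  proof (cases "\<exists>s. s \<in> dom (src G) \<and> src H s = Some w")
    case True
    then obtain s' a' where s': "src G s' = Some a'" "src H s' = Some w" by blast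
    have "2 * a' = 2 * v + 1" using pv_fused[OF assms(2) s'] pv_unfused[OF F] assms(3) by linarith
    with odd_neq show ?thesis by blast
  next
    case False
    then show ?thesis using pv_unfused[OF F] pv_unfused[OF False] assms(3) by linarith
  qed
qed

lemma wf_inj: "wf_graph G \<Longrightarrow> inj_on (src G) (dom (src G))"
  by (simp add: wf_graph_def)

lemma wf_ran: "wf_graph G \<Longrightarrow> src G s = Some v \<Longrightarrow> v \<in> verts G"
  unfolding wf_graph_def by (meson ranI subsetD)

lemma wf_att: "wf_graph G \<Longrightarrow> e \<in> edges G \<Longrightarrow> x \<in> set (att G e) \<Longrightarrow> x \<in> verts G"
  unfolding wf_graph_def by blast

lemma wf_zero: assumes "finite \<sigma>" shows "wf_graph (g_zero \<sigma>)"
proof -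
  let ?S = "(\<lambda>s. if s \<in> \<sigma> then Some (to_nat s) else None)"
  have d: "dom ?S = \<sigma>" by (simp add: dom_def)
  have r: "ran ?S \<subseteq> to_nat ` \<sigma>" by (auto simp: ran_def split: if_splits)
  have i: "inj_on ?S (dom ?S)" by (rule inj_onI) (simp add: d split: if_splits)
  show ?thesis unfolding wf_graph_def g_zero_def using assms d r i by simp
qed

lemma wf_edge: "wf_graph (g_edge a ss)"
proof -
  let ?S = "(\<lambda>s. if s \<in> set ss then Some (to_nat s) else None)"
  have d: "dom ?S = set ss" by (simp add: dom_def)
  have r: "ran ?S \<subseteq> to_nat ` set ss" by (auto simp: ran_def split: if_splits)
  have i: "inj_on ?S (dom ?S)" by (rule inj_onI) (simp add: d split: if_splits)
  show ?thesis unfolding wf_graph_def g_edge_def using d r i by simp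
qed

lemma wf_restrict: assumes "wf_graph G" shows "wf_graph (g_restrict \<sigma> G)"
proof -
  have "dom (src G |` \<sigma>) \<subseteq> dom (src G)" by auto
  then have "finite (dom (src G |` \<sigma>))" using assms finite_subset unfolding wf_graph_def by blast
  moreover have "ran (src G |` \<sigma>) \<subseteq> ran (src G)" by (auto simp: ran_def restrict_map_def)
  moreover have "inj_on (src G |` \<sigma>) (dom (src G |` \<sigma>))"
  proof (rule inj_onI)
    fix x y assume "x \<in> dom (src G |` \<sigma>)" "y \<in> dom (src G |` \<sigma>)" "(src G |` \<sigma>) x = (src G |` \<sigma>) y"
    then have "x \<in> dom (src G)" "y \<in> dom (src G)" "src G x = src G y" by (auto simp: restrict_map_def split: if_splits)
    then show "x = y" using assms unfolding wf_graph_def inj_on_def by blast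
  qed
  ultimately show ?thesis using assms unfolding wf_graph_def g_restrict_def by auto
qed

lemma wf_rename: assumes "bij \<beta>" "wf_graph G" shows "wf_graph (g_rename \<beta> G)"
proof -
  have d: "dom (src G \<circ> inv \<beta>) = \<beta> ` dom (src G)"
  proof
    show "dom (src G \<circ> inv \<beta>) \<subseteq> \<beta> ` dom (src G)"
    proof
      fix s assume "s \<in> dom (src G \<circ> inv \<beta>)"
      then have "inv \<beta> s \<in> dom (src G)" by auto
      moreover have "s = \<beta> (inv \<beta> s)" using assms(1) by (simp add: bij_is_surj surj_f_inv_f)
      ultimately show "s \<in> \<beta> ` dom (src G)" by blast
    qed
    show "\<beta> ` dom (src G) \<subseteq> dom (src G \<circ> inv \<beta>)"
      using assms(1) by (auto simp: bij_is_inj inv_f_f)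
  qed
  have ii: "inj (inv \<beta>)" using assms(1) by (simp add: bij_imp_bij_inv bij_is_inj)
  have "inj_on (src G \<circ> inv \<beta>) (dom (src G \<circ> inv \<beta>))"
  proof (rule inj_onI)
    fix x y assume "x \<in> dom (src G \<circ> inv \<beta>)" "y \<in> dom (src G \<circ> inv \<beta>)" "(src G \<circ> inv \<beta>) x = (src G \<circ> inv \<beta>) y"
    then have "inv \<beta> x \<in> dom (src G)" "inv \<beta> y \<in> dom (src G)" "src G (inv \<beta> x) = src G (inv \<beta> y)" by auto
    then have "inv \<beta> x = inv \<beta> y" using inj_onD[OF wf_inj[OF assms(2)]] by blast
    then show "x = y" using ii by (simp add: inj_eq)
  qed
  moreover have "ran (src G \<circ> inv \<beta>) \<subseteq> ran (src G)" by (auto simp: ran_def)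
  moreover have "finite (dom (src G \<circ> inv \<beta>))" using d assms(2) unfolding wf_graph_def by simp
  ultimately show ?thesis using assms(2) unfolding wf_graph_def g_rename_def by auto
qed

lemma par_simps:
  "verts (g_par G H) = (\<lambda>v. 2 * v) ` verts G \<union> par_vmap G H ` verts H"
  "edges (g_par G H) = (\<lambda>e. 2 * e) ` edges G \<union> (\<lambda>e. 2 * e + 1) ` edges H"
  "lab (g_par G H) (2 * e) = lab G e"
  "lab (g_par G H) (2 * e + 1) = lab H e"
  "att (g_par G H) (2 * e) = map (\<lambda>v. 2 * v) (att G e)"
  "att (g_par G H) (2 * e + 1) = map (par_vmap G H) (att H e)"
  "src (g_par G H) s = (case src G s of Some v \<Rightarrow> Some (2 * v) | None \<Rightarrow> map_option (par_vmap G H) (src H s))"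
  "lab (g_par G H) (Suc (2 * e)) = lab H e"
  "att (g_par G H) (Suc (2 * e)) = map (par_vmap G H) (att H e)"
  by (simp_all add: g_par_def)

lemma par_src_Some:
  "src (g_par G H) s = Some n \<longleftrightarrow>
    (\<exists>a. src G s = Some a \<and> n = 2 * a) \<or> (src G s = None \<and> (\<exists>b. src H s = Some b \<and> n = par_vmap G H b))"
  by (auto simp: par_simps split: option.splits)

lemma gsort_par: "gsort (g_par G H) = gsort G \<union> gsort H"
  unfolding gsort_def dom_def by (auto simp: par_simps split: option.splits)

lemma gsort_restrict: "gsort (g_restrict \<sigma> G) = gsort G \<inter> \<sigma>"
  unfolding gsort_def g_restrict_def by auto

lemma gsort_rename: "gsort (g_rename \<beta> G) = {s. inv \<beta> s \<in> gsort G}"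
  unfolding gsort_def g_rename_def by auto

lemma wf_par: assumes G: "wf_graph G" and H: "wf_graph H" shows "wf_graph (g_par G H)"
proof -
  have fv: "finite (verts (g_par G H))" using G H by (simp add: par_simps wf_graph_def)
  have fe: "finite (edges (g_par G H))" using G H by (simp add: par_simps wf_graph_def)
  have at: "\<forall>e\<in>edges (g_par G H). set (att (g_par G H) e) \<subseteq> verts (g_par G H)"
  proof
    fix e assume "e \<in> edges (g_par G H)"
    then consider e' where "e = 2 * e'" "e' \<in> edges G" | e' where "e = 2 * e' + 1" "e' \<in> edges H"
      by (auto simp: par_simps)
    then show "set (att (g_par G H) e) \<subseteq> verts (g_par G H)"
    proof cases
      case 1 then show ?thesis using wf_att[OF G] by (auto simp: par_simps)
    next
      case 2
      have "att (g_par G H) e = map (par_vmap G H) (att H e')" unfolding 2(1) by (rule par_simps(6))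
      then show ?thesis using wf_att[OF H] 2(2) by (auto simp: par_simps)
    qed
  qed
  have dd: "dom (src (g_par G H)) = dom (src G) \<union> dom (src H)"
    unfolding dom_def by (auto simp: par_simps split: option.splits)
  have fd: "finite (dom (src (g_par G H)))" using dd G H by (simp add: wf_graph_def)
  have rn: "ran (src (g_par G H)) \<subseteq> verts (g_par G H)"
  proof
    fix n assume "n \<in> ran (src (g_par G H))"
    then obtain s where "src (g_par G H) s = Some n" by (auto simp: ran_def)
    then show "n \<in> verts (g_par G H)" unfolding par_src_Some
      using wf_ran[OF G] wf_ran[OF H] by (auto simp: par_simps)
  qed
  have ij: "inj_on (src (g_par G H)) (dom (src (g_par G H)))"
  proof (rule inj_onI)
    fix x y assume "x \<in> dom (src (g_par G H))" "y \<in> dom (src (g_par G H))"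
      and eq: "src (g_par G H) x = src (g_par G H) y"
    then obtain n where nx: "src (g_par G H) x = Some n" and ny: "src (g_par G H) y = Some n" by auto
    show "x = y"
    proof (cases "src G x")
      case (Some a)
      with nx have n: "n = 2 * a" by (simp add: par_simps)
      show ?thesis
      proof (cases "src G y")
        case (Some a')
        with ny n have "a = a'" by (simp add: par_simps)
        then show ?thesis using Some \<open>src G x = Some a\<close> inj_onD[OF wf_inj[OF G]] by (metis domI)
      next
        case None
        with ny obtain b where b: "src H y = Some b" "n = par_vmap G H b" by (auto simp: par_simps)
        then have "2 * a = par_vmap G H b" using n by simp
        then obtain s where s: "src G s = Some a" "src H s = Some b"
          using pv_even_iff[OF wf_inj[OF H]] by blast
        have "s = x" using s \<open>src G x = Some a\<close> inj_onD[OF wf_inj[OF G]] by (metis domI)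
        then have "s = y" using s b inj_onD[OF wf_inj[OF H]] by (metis domI)
        then show ?thesis using \<open>s = x\<close> by simp
      qed
    next
      case None
      with nx obtain b where b: "src H x = Some b" "n = par_vmap G H b" by (auto simp: par_simps)
      show ?thesis
      proof (cases "src G y")
        case (Some a)
        with ny have n: "n = 2 * a" by (simp add: par_simps)
        then have "2 * a = par_vmap G H b" using b by simp
        then obtain s where s: "src G s = Some a" "src H s = Some b"
          using pv_even_iff[OF wf_inj[OF H]] by blast
        have "s = y" using s \<open>src G y = Some a\<close> inj_onD[OF wf_inj[OF G]] by (metis domI)
        then have "s = x" using s b inj_onD[OF wf_inj[OF H]] by (metis domI)
        then show ?thesis using \<open>s = y\<close> by simp
      next
        case None
        with ny obtain b' where b': "src H y = Some b'" "n = par_vmap G H b'" by (auto simp: par_simps)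
        have "b = b'" using pv_inj[OF wf_inj[OF G] wf_inj[OF H]] b b' by simp
        then show ?thesis using b b' inj_onD[OF wf_inj[OF H]] by (metis domI)
      qed
    qed
  qed
  show ?thesis unfolding wf_graph_def using fv fe at fd rn ij by blast
qed

lemma restrict_sel[simp]:
  "verts (g_restrict \<sigma> G) = verts G" "edges (g_restrict \<sigma> G) = edges G"
  "lab (g_restrict \<sigma> G) = lab G" "att (g_restrict \<sigma> G) = att G"
  "src (g_restrict \<sigma> G) = src G |` \<sigma>"
  by (simp_all add: g_restrict_def)

lemma rename_sel[simp]:
  "verts (g_rename \<beta> G) = verts G" "edges (g_rename \<beta> G) = edges G"
  "lab (g_rename \<beta> G) = lab G" "att (g_rename \<beta> G) = att G"
  "src (g_rename \<beta> G) = src G \<circ> inv \<beta>"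
  by (simp_all add: g_rename_def)

lemma par_restrict_cong:
  assumes "verts A = verts B" "edges A = edges B" "lab A = lab B" "att A = att B"
    "verts C = verts D" "edges C = edges D" "lab C = lab D" "att C = att D"
    "par_vmap A C = par_vmap B D"
  shows "g_restrict {} (g_par A C) = g_restrict {} (g_par B D)"
  unfolding g_restrict_def g_par_def by (simp only: assms, simp)

lemma pv_restrict_eq: "par_vmap (g_restrict \<sigma> x) C = par_vmap x (g_restrict \<sigma> C)"
proof
  fix v
  have P: "\<And>s. (s \<in> dom (src x |` \<sigma>) \<and> src C s = Some v) = (s \<in> dom (src x) \<and> (src C |` \<sigma>) s = Some v)"
    by (auto simp: restrict_map_def dom_def)
  show "par_vmap (g_restrict \<sigma> x) C v = par_vmap x (g_restrict \<sigma> C) v"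
  proof (cases "\<exists>s. s \<in> dom (src x) \<and> (src C |` \<sigma>) s = Some v")
    case True
    let ?s = "SOME s. s \<in> dom (src x) \<and> (src C |` \<sigma>) s = Some v"
    have "?s \<in> dom (src x) \<and> (src C |` \<sigma>) ?s = Some v" using someI_ex[OF True] .
    then have "?s \<in> \<sigma>" by (auto simp: restrict_map_def split: if_splits)
    then have eq: "(src x |` \<sigma>) ?s = src x ?s" by simp
    show ?thesis unfolding par_vmap_def restrict_sel by (simp only: P if_P[OF True] eq)
  next
    case False
    show ?thesis unfolding par_vmap_def restrict_sel by (simp only: P if_not_P[OF False])
  qed
qed

lemma restr_par_eq:
  "g_restrict {} (g_par (g_restrict \<sigma> x) C) = g_restrict {} (g_par x (g_restrict \<sigma> C))"
  by (rule par_restrict_cong) (simp_all add: pv_restrict_eq)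

lemma restrict_id: assumes "gsort x \<subseteq> \<sigma>" shows "g_restrict \<sigma> x = x"
proof -
  have "src x |` \<sigma> = src x"
  proof
    fix s show "(src x |` \<sigma>) s = src x s"
    proof (cases "s \<in> \<sigma>")
      case True then show ?thesis by simp
    next
      case False then have "s \<notin> dom (src x)" using assms unfolding gsort_def by blast
      then show ?thesis using False by (simp add: domIff)
    qed
  qed
  then show ?thesis unfolding g_restrict_def by simp
qed

lemma pv_rename_eq:
  assumes b: "bij \<beta>" and x: "wf_graph x" and C: "wf_graph C"
  shows "par_vmap (g_rename \<beta> x) C = par_vmap x (g_rename (inv \<beta>) C)"
proof
  fix v
  have bi: "bij (inv \<beta>)" using b by (simp add: bij_imp_bij_inv)
  have ii: "inv (inv \<beta>) = \<beta>" using b by (simp add: inv_inv_eq)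
  have sx: "\<And>s. src (g_rename \<beta> x) s = src x (inv \<beta> s)" by (simp add: g_rename_def)
  have sC: "\<And>s. src (g_rename (inv \<beta>) C) s = src C (\<beta> s)" by (simp add: g_rename_def ii)
  have wC: "wf_graph (g_rename (inv \<beta>) C)" using wf_rename[OF bi C] .
  show "par_vmap (g_rename \<beta> x) C v = par_vmap x (g_rename (inv \<beta>) C) v"
  proof (cases "\<exists>s a. src x (inv \<beta> s) = Some a \<and> src C s = Some v")
    case True
    then obtain s a where h: "src x (inv \<beta> s) = Some a" "src C s = Some v" by blast
    have l: "par_vmap (g_rename \<beta> x) C v = 2 * a"
      by (rule pv_fused[OF wf_inj[OF C], where s=s]) (simp_all only: sx h)
    have e: "\<beta> (inv \<beta> s) = s" using b by (simp add: bij_is_surj surj_f_inv_f)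
    have r: "par_vmap x (g_rename (inv \<beta>) C) v = 2 * a"
      by (rule pv_fused[OF wf_inj[OF wC], where s="inv \<beta> s"]) (simp_all only: sC h e)
    show ?thesis using l r by simp
  next
    case False
    have n1: "\<not> (\<exists>s. s \<in> dom (src (g_rename \<beta> x)) \<and> src C s = Some v)"
    proof
      assume "\<exists>s. s \<in> dom (src (g_rename \<beta> x)) \<and> src C s = Some v"
      then obtain s a where "src x (inv \<beta> s) = Some a" "src C s = Some v" by (auto simp: sx)
      then show False using False by blast
    qed
    have n2: "\<not> (\<exists>s. s \<in> dom (src x) \<and> src (g_rename (inv \<beta>) C) s = Some v)"
    proof
      assume "\<exists>s. s \<in> dom (src x) \<and> src (g_rename (inv \<beta>) C) s = Some v"
      then obtain s a where "src x s = Some a" "src C (\<beta> s) = Some v" by (auto simp: ii)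
      moreover have "inv \<beta> (\<beta> s) = s" using b by (simp add: bij_is_inj inv_f_f)
      ultimately show False using False by metis
    qed
    show ?thesis using pv_unfused[OF n1] pv_unfused[OF n2] by simp
  qed
qed

lemma rename_par_eq:
  assumes "bij \<beta>" "wf_graph x" "wf_graph C"
  shows "g_restrict {} (g_par (g_rename \<beta> x) C) = g_restrict {} (g_par x (g_rename (inv \<beta>) C))"
  by (rule par_restrict_cong) (simp_all add: pv_rename_eq[OF assms])

lemma trm_ok_mono: "trm_ok \<tau> t \<Longrightarrow> trm_ok UNIV t"
  by (induction t) auto

lemma wf_eval: "trm_ok UNIV t \<Longrightarrow> (\<And>i. wf_graph (\<rho> i)) \<Longrightarrow> wf_graph (eval \<rho> t)"
proof (induction t)
  case (TVar i) then show ?case by simp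
next
  case (TZero \<sigma>) then show ?case by (simp add: wf_zero)
next
  case (TEdge a ss) then show ?case by (simp add: wf_edge)
next
  case (TRestrict \<sigma> t) then show ?case by (simp add: wf_restrict)
next
  case (TRename \<beta> t) then show ?case by (simp add: wf_rename finite_perm_def)
next
  case (TPar t u) then show ?case by (simp add: wf_par)
qed

definition glue :: "('s, 'a) sgraph \<Rightarrow> nat set \<Rightarrow> (nat \<Rightarrow> ('s, 'a) sgraph)
    \<Rightarrow> (nat \<Rightarrow> nat \<Rightarrow> nat) \<Rightarrow> (nat \<Rightarrow> nat \<Rightarrow> nat) \<Rightarrow> bool" where
  "glue G K X iv ie \<longleftrightarrow>
     verts G = (\<Union>k\<in>K. iv k ` verts (X k)) \<and>
     edges G = (\<Union>k\<in>K. ie k ` edges (X k)) \<and>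
     (\<forall>k\<in>K. \<forall>e\<in>edges (X k). lab G (ie k e) = lab (X k) e \<and> att G (ie k e) = map (iv k) (att (X k) e)) \<and>
     (\<forall>k\<in>K. \<forall>l\<in>K. \<forall>e\<in>edges (X k). \<forall>e'\<in>edges (X l). ie k e = ie l e' \<longleftrightarrow> k = l \<and> e = e') \<and>
     (\<forall>k\<in>K. \<forall>l\<in>K. \<forall>v\<in>verts (X k). \<forall>w\<in>verts (X l).
        iv k v = iv l w \<longleftrightarrow> (k = l \<and> v = w) \<or> (\<exists>s. src (X k) s = Some v \<and> src (X l) s = Some w)) \<and>
     (\<forall>s n. src G s = Some n \<longleftrightarrow> (\<exists>k\<in>K. \<exists>v. src (X k) s = Some v \<and> n = iv k v))"

lemma glueD:
  assumes "glue G K X iv ie"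
  shows glueV: "verts G = (\<Union>k\<in>K. iv k ` verts (X k))"
    and glueE: "edges G = (\<Union>k\<in>K. ie k ` edges (X k))"
    and glueL: "\<forall>k\<in>K. \<forall>e\<in>edges (X k). lab G (ie k e) = lab (X k) e \<and> att G (ie k e) = map (iv k) (att (X k) e)"
    and glueEI: "\<forall>k\<in>K. \<forall>l\<in>K. \<forall>e\<in>edges (X k). \<forall>e'\<in>edges (X l). ie k e = ie l e' \<longleftrightarrow> k = l \<and> e = e'"
    and glueVI: "\<forall>k\<in>K. \<forall>l\<in>K. \<forall>v\<in>verts (X k). \<forall>w\<in>verts (X l).
        iv k v = iv l w \<longleftrightarrow> (k = l \<and> v = w) \<or> (\<exists>s. src (X k) s = Some v \<and> src (X l) s = Some w)"
    and glueS: "\<forall>s n. src G s = Some n \<longleftrightarrow> (\<exists>k\<in>K. \<exists>v. src (X k) s = Some v \<and> n = iv k v)"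
proof -
  note A = assms[unfolded glue_def]
  show "verts G = (\<Union>k\<in>K. iv k ` verts (X k))" using A by (rule conjunct1)
  show "edges G = (\<Union>k\<in>K. ie k ` edges (X k))" using A[THEN conjunct2] by (rule conjunct1)
  show "\<forall>k\<in>K. \<forall>e\<in>edges (X k). lab G (ie k e) = lab (X k) e \<and> att G (ie k e) = map (iv k) (att (X k) e)"
    using A[THEN conjunct2, THEN conjunct2] by (rule conjunct1)
  show "\<forall>k\<in>K. \<forall>l\<in>K. \<forall>e\<in>edges (X k). \<forall>e'\<in>edges (X l). ie k e = ie l e' \<longleftrightarrow> k = l \<and> e = e'"
    using A[THEN conjunct2, THEN conjunct2, THEN conjunct2] by (rule conjunct1)
  show "\<forall>k\<in>K. \<forall>l\<in>K. \<forall>v\<in>verts (X k). \<forall>w\<in>verts (X l).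
        iv k v = iv l w \<longleftrightarrow> (k = l \<and> v = w) \<or> (\<exists>s. src (X k) s = Some v \<and> src (X l) s = Some w)"
    using A[THEN conjunct2, THEN conjunct2, THEN conjunct2, THEN conjunct2] by (rule conjunct1)
  show "\<forall>s n. src G s = Some n \<longleftrightarrow> (\<exists>k\<in>K. \<exists>v. src (X k) s = Some v \<and> n = iv k v)"
    using A[THEN conjunct2, THEN conjunct2, THEN conjunct2, THEN conjunct2] by (rule conjunct2)
qed

lemma glue_iso:
  assumes gG: "glue G K X iv ie" and gH: "glue H K X jv je" and wf: "\<And>k. k \<in> K \<Longrightarrow> wf_graph (X k)"
  shows "graph_iso G H"
proof -
  have GV: "verts G = (\<Union>k\<in>K. iv k ` verts (X k))" using glueV[OF gG] .
  have GE: "edges G = (\<Union>k\<in>K. ie k ` edges (X k))" using glueE[OF gG] .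
  have GL: "\<forall>k\<in>K. \<forall>e\<in>edges (X k). lab G (ie k e) = lab (X k) e \<and> att G (ie k e) = map (iv k) (att (X k) e)" using glueL[OF gG] .
  have GEI: "\<forall>k\<in>K. \<forall>l\<in>K. \<forall>e\<in>edges (X k). \<forall>e'\<in>edges (X l). ie k e = ie l e' \<longleftrightarrow> k = l \<and> e = e'" using glueEI[OF gG] .
  have GVI: "\<forall>k\<in>K. \<forall>l\<in>K. \<forall>v\<in>verts (X k). \<forall>w\<in>verts (X l).
        iv k v = iv l w \<longleftrightarrow> (k = l \<and> v = w) \<or> (\<exists>s. src (X k) s = Some v \<and> src (X l) s = Some w)" using glueVI[OF gG] .
  have GS: "\<forall>s n. src G s = Some n \<longleftrightarrow> (\<exists>k\<in>K. \<exists>v. src (X k) s = Some v \<and> n = iv k v)" using glueS[OF gG] .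
  have HV: "verts H = (\<Union>k\<in>K. jv k ` verts (X k))" using glueV[OF gH] .
  have HE: "edges H = (\<Union>k\<in>K. je k ` edges (X k))" using glueE[OF gH] .
  have HL: "\<forall>k\<in>K. \<forall>e\<in>edges (X k). lab H (je k e) = lab (X k) e \<and> att H (je k e) = map (jv k) (att (X k) e)" using glueL[OF gH] .
  have HEI: "\<forall>k\<in>K. \<forall>l\<in>K. \<forall>e\<in>edges (X k). \<forall>e'\<in>edges (X l). je k e = je l e' \<longleftrightarrow> k = l \<and> e = e'" using glueEI[OF gH] .
  have HVI: "\<forall>k\<in>K. \<forall>l\<in>K. \<forall>v\<in>verts (X k). \<forall>w\<in>verts (X l).
        jv k v = jv l w \<longleftrightarrow> (k = l \<and> v = w) \<or> (\<exists>s. src (X k) s = Some v \<and> src (X l) s = Some w)" using glueVI[OF gH] .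
  have HS: "\<forall>s n. src H s = Some n \<longleftrightarrow> (\<exists>k\<in>K. \<exists>v. src (X k) s = Some v \<and> n = jv k v)" using glueS[OF gH] .
  have VV: "\<And>k l v w. k \<in> K \<Longrightarrow> l \<in> K \<Longrightarrow> v \<in> verts (X k) \<Longrightarrow> w \<in> verts (X l) \<Longrightarrow>
      iv k v = iv l w \<longleftrightarrow> jv k v = jv l w"
    by (simp only: GVI[rule_format] HVI[rule_format])
  have EE: "\<And>k l e e'. k \<in> K \<Longrightarrow> l \<in> K \<Longrightarrow> e \<in> edges (X k) \<Longrightarrow> e' \<in> edges (X l) \<Longrightarrow>
      ie k e = ie l e' \<longleftrightarrow> je k e = je l e'"
    by (simp only: GEI[rule_format] HEI[rule_format])
  define f where "f n = (let p = (SOME p. fst p \<in> K \<and> snd p \<in> verts (X (fst p)) \<and> iv (fst p) (snd p) = n)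
     in jv (fst p) (snd p))" for n
  define g where "g n = (let p = (SOME p. fst p \<in> K \<and> snd p \<in> edges (X (fst p)) \<and> ie (fst p) (snd p) = n)
     in je (fst p) (snd p))" for n
  have fk: "f (iv k v) = jv k v" if "k \<in> K" "v \<in> verts (X k)" for k v
  proof -
    let ?P = "\<lambda>p. fst p \<in> K \<and> snd p \<in> verts (X (fst p)) \<and> iv (fst p) (snd p) = iv k v"
    have "?P (k, v)" using that by simp
    then have P: "?P (SOME p. ?P p)" by (rule someI)
    obtain k' v' where kv1: "(SOME p. ?P p) = (k', v')" by (cases "SOME p. ?P p") blast
    have kv: "(SOME p. ?P p) = (k', v')" "k' \<in> K" "v' \<in> verts (X k')" "iv k' v' = iv k v"
      using P unfolding kv1 by simp_all
    have "jv k' v' = jv k v" using VV[OF kv(2) that(1) kv(3) that(2)] kv(4) by simp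
    then show ?thesis unfolding f_def using kv(1) by simp
  qed
  have gk: "g (ie k e) = je k e" if "k \<in> K" "e \<in> edges (X k)" for k e
  proof -
    let ?P = "\<lambda>p. fst p \<in> K \<and> snd p \<in> edges (X (fst p)) \<and> ie (fst p) (snd p) = ie k e"
    have "?P (k, e)" using that by simp
    then have P: "?P (SOME p. ?P p)" by (rule someI)
    obtain k' e' where kv1: "(SOME p. ?P p) = (k', e')" by (cases "SOME p. ?P p") blast
    have kv: "(SOME p. ?P p) = (k', e')" "k' \<in> K" "e' \<in> edges (X k')" "ie k' e' = ie k e"
      using P unfolding kv1 by simp_all
    have "je k' e' = je k e" using EE[OF kv(2) that(1) kv(3) that(2)] kv(4) by simp
    then show ?thesis unfolding g_def using kv(1) by simp
  qed
  have bf: "bij_betw f (verts G) (verts H)"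
    unfolding bij_betw_def
  proof
    show "inj_on f (verts G)"
    proof (rule inj_onI)
      fix x y assume "x \<in> verts G" "y \<in> verts G" "f x = f y"
      then obtain k v l w where "k \<in> K" "v \<in> verts (X k)" "x = iv k v" "l \<in> K" "w \<in> verts (X l)" "y = iv l w"
        "f x = f y" unfolding GV by blast
      then have "jv k v = jv l w" using fk by simp
      then have "iv k v = iv l w" using VV[OF \<open>k \<in> K\<close> \<open>l \<in> K\<close> \<open>v \<in> verts (X k)\<close> \<open>w \<in> verts (X l)\<close>] by simp
      then show "x = y" using \<open>x = iv k v\<close> \<open>y = iv l w\<close> by simp
    qed
    show "f ` verts G = verts H"
    proof
      show "f ` verts G \<subseteq> verts H"
      proof
        fix y assume "y \<in> f ` verts G"
        then obtain k v where "k \<in> K" "v \<in> verts (X k)" "y = f (iv k v)" unfolding GV by blast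
        then show "y \<in> verts H" unfolding HV using fk by blast
      qed
      show "verts H \<subseteq> f ` verts G"
      proof
        fix y assume "y \<in> verts H"
        then obtain k v where "k \<in> K" "v \<in> verts (X k)" "y = jv k v" unfolding HV by blast
        then have "y = f (iv k v)" "iv k v \<in> verts G" using fk unfolding GV by auto
        then show "y \<in> f ` verts G" by blast
      qed
    qed
  qed
  have bg: "bij_betw g (edges G) (edges H)"
    unfolding bij_betw_def
  proof
    show "inj_on g (edges G)"
    proof (rule inj_onI)
      fix x y assume "x \<in> edges G" "y \<in> edges G" "g x = g y"
      then obtain k v l w where "k \<in> K" "v \<in> edges (X k)" "x = ie k v" "l \<in> K" "w \<in> edges (X l)" "y = ie l w"
        "g x = g y" unfolding GE by blast
      then have "je k v = je l w" using gk by simp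
      then have "ie k v = ie l w" using EE[OF \<open>k \<in> K\<close> \<open>l \<in> K\<close> \<open>v \<in> edges (X k)\<close> \<open>w \<in> edges (X l)\<close>] by simp
      then show "x = y" using \<open>x = ie k v\<close> \<open>y = ie l w\<close> by simp
    qed
    show "g ` edges G = edges H"
    proof
      show "g ` edges G \<subseteq> edges H"
      proof
        fix y assume "y \<in> g ` edges G"
        then obtain k v where "k \<in> K" "v \<in> edges (X k)" "y = g (ie k v)" unfolding GE by blast
        then show "y \<in> edges H" unfolding HE using gk by blast
      qed
      show "edges H \<subseteq> g ` edges G"
      proof
        fix y assume "y \<in> edges H"
        then obtain k v where "k \<in> K" "v \<in> edges (X k)" "y = je k v" unfolding HE by blast
        then have "y = g (ie k v)" "ie k v \<in> edges G" using gk unfolding GE by auto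
        then show "y \<in> g ` edges G" by blast
      qed
    qed
  qed
  have la: "\<forall>e\<in>edges G. lab H (g e) = lab G e \<and> att H (g e) = map f (att G e)"
  proof
    fix e assume "e \<in> edges G"
    then obtain k e' where ke: "k \<in> K" "e' \<in> edges (X k)" "e = ie k e'" unfolding GE by blast
    have lG: "lab G (ie k e') = lab (X k) e'" and aG: "att G (ie k e') = map (iv k) (att (X k) e')"
      using GL ke(1,2) by blast+
    have lH: "lab H (je k e') = lab (X k) e'" and aH: "att H (je k e') = map (jv k) (att (X k) e')"
      using HL ke(1,2) by blast+
    have gke: "g (ie k e') = je k e'" using gk ke(1,2) by simp
    have m: "map f (map (iv k) (att (X k) e')) = map (jv k) (att (X k) e')"
      unfolding map_map
    proof (rule map_cong[OF refl])
      fix z assume "z \<in> set (att (X k) e')"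
      then have "z \<in> verts (X k)" using wf_att[OF wf[OF ke(1)] ke(2)] by blast
      then show "(f \<circ> iv k) z = jv k z" using fk[OF ke(1)] by simp
    qed
    show "lab H (g e) = lab G e \<and> att H (g e) = map f (att G e)"
      unfolding ke(3) gke lG lH aG aH m by simp
  qed
  have ss: "src H s = map_option f (src G s)" for s
  proof (cases "src G s")
    case None
    show ?thesis
    proof (cases "src H s")
      case (Some m)
      then obtain k v where "k \<in> K" "src (X k) s = Some v" using HS by blast
      then have "src G s \<noteq> None" using GS by blast
      then show ?thesis using None by simp
    qed (simp add: None)
  next
    case (Some n)
    then obtain k v where kv: "k \<in> K" "src (X k) s = Some v" "n = iv k v" using GS by blast
    then have "src H s = Some (jv k v)" using HS by blast
    moreover have "v \<in> verts (X k)" using wf_ran[OF wf[OF kv(1)] kv(2)] .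
    ultimately show ?thesis using Some kv fk by simp
  qed
  show ?thesis unfolding graph_iso_def using bf bg la ss by blast
qed

lemma glue_single:
  assumes "X k = G" "wf_graph G"
  shows "glue G {k} X (\<lambda>_ v. v) (\<lambda>_ e. e)"
proof -
  have "\<And>v w. (\<exists>s. src G s = Some v \<and> src G s = Some w) \<Longrightarrow> v = w" by auto
  then show ?thesis unfolding glue_def using assms by auto
qed

lemma glue_src_iff:
  assumes gG: "glue G K X iv ie" and wf: "\<And>k. k \<in> K \<Longrightarrow> wf_graph (X k)"
    and k: "k \<in> K" and v: "v \<in> verts (X k)"
  shows "src G s = Some (iv k v) \<longleftrightarrow> src (X k) s = Some v"
proof
  have GVI: "\<forall>k\<in>K. \<forall>l\<in>K. \<forall>v\<in>verts (X k). \<forall>w\<in>verts (X l).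
        iv k v = iv l w \<longleftrightarrow> (k = l \<and> v = w) \<or> (\<exists>s. src (X k) s = Some v \<and> src (X l) s = Some w)" using glueVI[OF gG] .
  have GS: "\<forall>s n. src G s = Some n \<longleftrightarrow> (\<exists>k\<in>K. \<exists>v. src (X k) s = Some v \<and> n = iv k v)" using glueS[OF gG] .
  assume "src G s = Some (iv k v)"
  then obtain k' v' where kv: "k' \<in> K" "src (X k') s = Some v'" "iv k v = iv k' v'" using GS by blast
  have v': "v' \<in> verts (X k')" using wf_ran[OF wf[OF kv(1)] kv(2)] .
  have "iv k' v' = iv k v \<longleftrightarrow> (k' = k \<and> v' = v) \<or> (\<exists>s. src (X k') s = Some v' \<and> src (X k) s = Some v)"
    using GVI[rule_format, OF kv(1) k v' v] .
  then have "(k' = k \<and> v' = v) \<or> (\<exists>s. src (X k') s = Some v' \<and> src (X k) s = Some v)"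
    using kv(3) by simp
  then show "src (X k) s = Some v"
  proof
    assume "k' = k \<and> v' = v" then show ?thesis using kv by simp
  next
    assume "\<exists>s. src (X k') s = Some v' \<and> src (X k) s = Some v"
    then obtain s' where s': "src (X k') s' = Some v'" "src (X k) s' = Some v" by blast
    have "s' \<in> dom (src (X k'))" "s \<in> dom (src (X k'))" "src (X k') s' = src (X k') s" using s'(1) kv(2) by auto
    then have "s' = s" using inj_onD[OF wf_inj[OF wf[OF kv(1)]]] by blast
    then show ?thesis using s' by simp
  qed
next
  have GS: "\<forall>s n. src G s = Some n \<longleftrightarrow> (\<exists>k\<in>K. \<exists>v. src (X k) s = Some v \<and> n = iv k v)" using glueS[OF gG] .
  assume "src (X k) s = Some v" then show "src G s = Some (iv k v)" using GS k by blast
qed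

lemma glue_par:
  assumes gG: "glue G K1 X iv1 ie1" and gH: "glue H K2 X iv2 ie2" and disj: "K1 \<inter> K2 = {}"
    and wG: "wf_graph G" and wH: "wf_graph H" and wX: "\<And>k. k \<in> K1 \<union> K2 \<Longrightarrow> wf_graph (X k)"
  shows "glue (g_par G H) (K1 \<union> K2) X
     (\<lambda>k v. if k \<in> K1 then 2 * iv1 k v else par_vmap G H (iv2 k v))
     (\<lambda>k e. if k \<in> K1 then 2 * ie1 k e else 2 * ie2 k e + 1)"
proof -
  define jv where "jv = (\<lambda>k v. if k \<in> K1 then 2 * iv1 k v else par_vmap G H (iv2 k v))"
  define je where "je = (\<lambda>k e. if k \<in> K1 then 2 * ie1 k e else 2 * ie2 k e + 1)"
  have jv1: "k \<in> K1 \<Longrightarrow> jv k = (\<lambda>v. 2 * iv1 k v)" for k by (simp add: jv_def)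
  have nK1: "k \<in> K2 \<Longrightarrow> k \<notin> K1" for k using disj by blast
  have jv2: "k \<in> K2 \<Longrightarrow> jv k = (\<lambda>v. par_vmap G H (iv2 k v))" for k using nK1[of k] by (simp add: jv_def)
  have je1: "k \<in> K1 \<Longrightarrow> je k = (\<lambda>e. 2 * ie1 k e)" for k by (simp add: je_def)
  have je2: "k \<in> K2 \<Longrightarrow> je k = (\<lambda>e. 2 * ie2 k e + 1)" for k using nK1[of k] by (simp add: je_def)
  have wX1: "k \<in> K1 \<Longrightarrow> wf_graph (X k)" for k using wX by blast
  have wX2: "k \<in> K2 \<Longrightarrow> wf_graph (X k)" for k using wX by blast
  note GV = glueV[OF gG] and GE = glueE[OF gG] and GL = glueL[OF gG] and GEI = glueEI[OF gG]
    and GVI = glueVI[OF gG] and GS = glueS[OF gG]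
  note HV = glueV[OF gH] and HE = glueE[OF gH] and HL = glueL[OF gH] and HEI = glueEI[OF gH]
    and HVI = glueVI[OF gH] and HS = glueS[OF gH]
  have sG: "k \<in> K1 \<Longrightarrow> v \<in> verts (X k) \<Longrightarrow> src G s = Some (iv1 k v) \<longleftrightarrow> src (X k) s = Some v" for k v s
    by (rule glue_src_iff[OF gG wX1])
  have sH: "k \<in> K2 \<Longrightarrow> v \<in> verts (X k) \<Longrightarrow> src H s = Some (iv2 k v) \<longleftrightarrow> src (X k) s = Some v" for k v s
    by (rule glue_src_iff[OF gH wX2])
  have V: "verts (g_par G H) = (\<Union>k\<in>K1 \<union> K2. jv k ` verts (X k))"
  proof -
    have A: "(\<lambda>v. 2 * v) ` verts G = (\<Union>k\<in>K1. jv k ` verts (X k))"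
      unfolding GV image_UN by (rule SUP_cong) (simp_all add: jv1 image_image)
    have B: "par_vmap G H ` verts H = (\<Union>k\<in>K2. jv k ` verts (X k))"
      unfolding HV image_UN by (rule SUP_cong) (simp_all add: jv2 image_image)
    show ?thesis unfolding par_simps(1) A B UN_Un ..
  qed
  have E: "edges (g_par G H) = (\<Union>k\<in>K1 \<union> K2. je k ` edges (X k))"
  proof -
    have A: "(\<lambda>v. 2 * v) ` edges G = (\<Union>k\<in>K1. je k ` edges (X k))"
      unfolding GE image_UN by (rule SUP_cong) (simp_all add: je1 image_image)
    have B: "(\<lambda>e. 2 * e + 1) ` edges H = (\<Union>k\<in>K2. je k ` edges (X k))"
      unfolding HE image_UN by (rule SUP_cong) (simp_all add: je2 image_image)
    show ?thesis unfolding par_simps(2) A B UN_Un ..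
  qed
  have L: "\<forall>k\<in>K1 \<union> K2. \<forall>e\<in>edges (X k). lab (g_par G H) (je k e) = lab (X k) e \<and>
      att (g_par G H) (je k e) = map (jv k) (att (X k) e)"
  proof (intro ballI)
    fix k e assume k: "k \<in> K1 \<union> K2" and e: "e \<in> edges (X k)"
    show "lab (g_par G H) (je k e) = lab (X k) e \<and> att (g_par G H) (je k e) = map (jv k) (att (X k) e)"
    proof (cases "k \<in> K1")
      case True
      have "lab G (ie1 k e) = lab (X k) e \<and> att G (ie1 k e) = map (iv1 k) (att (X k) e)"
        using GL[rule_format, OF True e] .
      then show ?thesis using True by (simp add: je1 jv1 par_simps map_map o_def)
    next
      case False
      then have k2: "k \<in> K2" using k by blast
      have "lab H (ie2 k e) = lab (X k) e \<and> att H (ie2 k e) = map (iv2 k) (att (X k) e)"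
        using HL[rule_format, OF k2 e] .
      then show ?thesis using k2 by (simp add: je2 jv2 par_simps map_map o_def)
    qed
  qed
  have EI: "\<forall>k\<in>K1 \<union> K2. \<forall>l\<in>K1 \<union> K2. \<forall>e\<in>edges (X k). \<forall>e'\<in>edges (X l). je k e = je l e' \<longleftrightarrow> k = l \<and> e = e'"
  proof (intro ballI)
    fix k l e e' assume k: "k \<in> K1 \<union> K2" and l: "l \<in> K1 \<union> K2" and e: "e \<in> edges (X k)" and e': "e' \<in> edges (X l)"
    show "je k e = je l e' \<longleftrightarrow> k = l \<and> e = e'"
    proof (cases "k \<in> K1")
      case True
      show ?thesis
      proof (cases "l \<in> K1")
        case True
        have "ie1 k e = ie1 l e' \<longleftrightarrow> k = l \<and> e = e'" using GEI[rule_format, OF \<open>k \<in> K1\<close> True e e'] .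
        then show ?thesis using \<open>k \<in> K1\<close> True by (simp add: je1)
      next
        case False
        then have "l \<in> K2" using l by blast
        have "2 * ie1 k e \<noteq> 2 * ie2 l e' + 1" by (rule odd_neq)
        then show ?thesis using \<open>k \<in> K1\<close> False \<open>l \<in> K2\<close> by (auto simp: je1 je2)
      qed
    next
      case False
      then have k2: "k \<in> K2" using k by blast
      show ?thesis
      proof (cases "l \<in> K1")
        case True
        have "2 * ie1 l e' \<noteq> 2 * ie2 k e + 1" by (rule odd_neq)
        then show ?thesis using False k2 True by (auto simp: je1 je2)
      next
        case False
        then have l2: "l \<in> K2" using l by blast
        have "ie2 k e = ie2 l e' \<longleftrightarrow> k = l \<and> e = e'" using HEI[rule_format, OF k2 l2 e e'] .
        then show ?thesis using k2 l2 by (simp add: je2)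
      qed
    qed
  qed
  have mixed: "(2 * iv1 k v = par_vmap G H (iv2 l w)) \<longleftrightarrow> (\<exists>s. src (X k) s = Some v \<and> src (X l) s = Some w)"
    if "k \<in> K1" "l \<in> K2" "v \<in> verts (X k)" "w \<in> verts (X l)" for k l v w
    by (simp only: pv_even_iff[OF wf_inj[OF wH]] sG[OF that(1) that(3)] sH[OF that(2) that(4)])
  have VI: "\<forall>k\<in>K1 \<union> K2. \<forall>l\<in>K1 \<union> K2. \<forall>v\<in>verts (X k). \<forall>w\<in>verts (X l).
        jv k v = jv l w \<longleftrightarrow> (k = l \<and> v = w) \<or> (\<exists>s. src (X k) s = Some v \<and> src (X l) s = Some w)"
  proof (intro ballI)
    fix k l v w assume k: "k \<in> K1 \<union> K2" and l: "l \<in> K1 \<union> K2" and v: "v \<in> verts (X k)" and w: "w \<in> verts (X l)"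
    show "jv k v = jv l w \<longleftrightarrow> (k = l \<and> v = w) \<or> (\<exists>s. src (X k) s = Some v \<and> src (X l) s = Some w)"
    proof (cases "k \<in> K1")
      case True
      show ?thesis
      proof (cases "l \<in> K1")
        case True
        have "iv1 k v = iv1 l w \<longleftrightarrow> (k = l \<and> v = w) \<or> (\<exists>s. src (X k) s = Some v \<and> src (X l) s = Some w)"
          using GVI[rule_format, OF \<open>k \<in> K1\<close> True v w] .
        then show ?thesis using \<open>k \<in> K1\<close> True by (simp add: jv1)
      next
        case False
        then have l2: "l \<in> K2" using l by blast
        have "k \<noteq> l" using \<open>k \<in> K1\<close> False by blast
        then show ?thesis using mixed[OF \<open>k \<in> K1\<close> l2 v w] \<open>k \<in> K1\<close> l2 by (simp add: jv1 jv2)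
      qed
    next
      case False
      then have k2: "k \<in> K2" using k by blast
      show ?thesis
      proof (cases "l \<in> K1")
        case True
        have "k \<noteq> l" using False True by blast
        moreover have "(\<exists>s. src (X l) s = Some w \<and> src (X k) s = Some v) \<longleftrightarrow> (\<exists>s. src (X k) s = Some v \<and> src (X l) s = Some w)"
          by blast
        ultimately show ?thesis using mixed[OF True k2 w v] True k2 by (auto simp: jv1 jv2)
      next
        case False
        then have l2: "l \<in> K2" using l by blast
        have "iv2 k v = iv2 l w \<longleftrightarrow> (k = l \<and> v = w) \<or> (\<exists>s. src (X k) s = Some v \<and> src (X l) s = Some w)"
          using HVI[rule_format, OF k2 l2 v w] .
        moreover have "par_vmap G H (iv2 k v) = par_vmap G H (iv2 l w) \<longleftrightarrow> iv2 k v = iv2 l w"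
        proof
          assume "par_vmap G H (iv2 k v) = par_vmap G H (iv2 l w)"
          then show "iv2 k v = iv2 l w" by (rule pv_inj[OF wf_inj[OF wG] wf_inj[OF wH]])
        qed simp
        ultimately show ?thesis using k2 l2 by (simp add: jv2)
      qed
    qed
  qed
  have S: "\<forall>s n. src (g_par G H) s = Some n \<longleftrightarrow> (\<exists>k\<in>K1 \<union> K2. \<exists>v. src (X k) s = Some v \<and> n = jv k v)"
  proof (intro allI iffI)
    fix s n assume "src (g_par G H) s = Some n"
    then have "(\<exists>a. src G s = Some a \<and> n = 2 * a) \<or> (src G s = None \<and> (\<exists>b. src H s = Some b \<and> n = par_vmap G H b))"
      unfolding par_src_Some .
    then show "\<exists>k\<in>K1 \<union> K2. \<exists>v. src (X k) s = Some v \<and> n = jv k v"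
    proof
      assume "\<exists>a. src G s = Some a \<and> n = 2 * a"
      then obtain a where a: "src G s = Some a" "n = 2 * a" by blast
      from iffD1[OF GS[rule_format] a(1)] obtain k v where "k \<in> K1" "src (X k) s = Some v" "a = iv1 k v" by blast
      then show ?thesis using a by (intro bexI[of _ k] exI[of _ v]) (auto simp: jv1)
    next
      assume "src G s = None \<and> (\<exists>b. src H s = Some b \<and> n = par_vmap G H b)"
      then obtain b where b: "src H s = Some b" "n = par_vmap G H b" by blast
      from iffD1[OF HS[rule_format] b(1)] obtain k v where "k \<in> K2" "src (X k) s = Some v" "b = iv2 k v" by blast
      then show ?thesis using b by (intro bexI[of _ k] exI[of _ v]) (auto simp: jv2)
    qed
  next
    fix s n assume "\<exists>k\<in>K1 \<union> K2. \<exists>v. src (X k) s = Some v \<and> n = jv k v"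
    then obtain k v where k: "k \<in> K1 \<union> K2" and kv: "src (X k) s = Some v" "n = jv k v" by blast
    show "src (g_par G H) s = Some n"
    proof (cases "k \<in> K1")
      case True
      then have "src G s = Some (iv1 k v)" by (intro iffD2[OF GS[rule_format]]) (use kv(1) in blast)
      then show ?thesis unfolding par_src_Some using kv(2) True by (simp add: jv1)
    next
      case False
      then have k2: "k \<in> K2" using k by blast
      then have h: "src H s = Some (iv2 k v)" by (intro iffD2[OF HS[rule_format]]) (use kv(1) in blast)
      have n: "n = par_vmap G H (iv2 k v)" using kv(2) k2 by (simp add: jv2)
      show ?thesis
      proof (cases "src G s")
        case None
        then show ?thesis unfolding par_src_Some using h n by simp
      next
        case (Some a)
        have "par_vmap G H (iv2 k v) = 2 * a" by (rule pv_fused[OF wf_inj[OF wH] Some h])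
        then show ?thesis unfolding par_src_Some using Some n by simp
      qed
    qed
  qed
  have "glue (g_par G H) (K1 \<union> K2) X jv je"
    unfolding glue_def by (intro conjI) (fact V E L EI VI S)+
  then show ?thesis unfolding jv_def je_def .
qed

definition isglue :: "('s, 'a) sgraph \<Rightarrow> nat set \<Rightarrow> (nat \<Rightarrow> ('s, 'a) sgraph) \<Rightarrow> bool" where
  "isglue G K X \<longleftrightarrow> (\<exists>iv ie. glue G K X iv ie)"

lemma isglue_single: "X k = G \<Longrightarrow> wf_graph G \<Longrightarrow> isglue G {k} X"
  unfolding isglue_def using glue_single by blast

lemma isglue_par:
  assumes "isglue G K1 X" "isglue H K2 X" "K1 \<inter> K2 = {}" "wf_graph G" "wf_graph H"
    "\<And>k. k \<in> K1 \<union> K2 \<Longrightarrow> wf_graph (X k)"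
  shows "isglue (g_par G H) (K1 \<union> K2) X"
proof -
  obtain iv1 ie1 iv2 ie2 where "glue G K1 X iv1 ie1" "glue H K2 X iv2 ie2"
    using assms(1,2) unfolding isglue_def by blast
  from glue_par[OF this assms(3-6)] show ?thesis unfolding isglue_def by blast
qed

lemma isglue_iso:
  assumes "isglue G K X" "isglue H K X" "\<And>k. k \<in> K \<Longrightarrow> wf_graph (X k)"
  shows "graph_iso G H"
proof -
  obtain iv1 ie1 iv2 ie2 where "glue G K X iv1 ie1" "glue H K X iv2 ie2"
    using assms(1,2) unfolding isglue_def by blast
  from glue_iso[OF this assms(3)] show ?thesis .
qed

lemma isglue_zero: "isglue (g_zero {}) {} X"
proof -
  have "glue (g_zero {}) {} X (\<lambda>_ v. v) (\<lambda>_ e. e)"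
    unfolding glue_def by (simp add: g_zero_def)
  then show ?thesis unfolding isglue_def by blast
qed

lemma iso_restrict:
  assumes "graph_iso G H" shows "graph_iso (g_restrict \<sigma> G) (g_restrict \<sigma> H)"
proof -
  obtain f g where h: "bij_betw f (verts G) (verts H)" "bij_betw g (edges G) (edges H)"
     "\<forall>e\<in>edges G. lab H (g e) = lab G e \<and> att H (g e) = map f (att G e)"
     "\<forall>s. src H s = map_option f (src G s)"
    using assms unfolding graph_iso_def by blast
  have "\<forall>s. (src H |` \<sigma>) s = map_option f ((src G |` \<sigma>) s)" using h(4) by (simp add: restrict_map_def)
  then show ?thesis unfolding graph_iso_def using h(1-3) by auto
qed

lemma iso_L: "iso_closed L \<Longrightarrow> graph_iso A B \<Longrightarrow> graph_iso B A \<Longrightarrow> (A \<in> L \<longleftrightarrow> B \<in> L)"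
  unfolding iso_closed_def by blast

lemma assoc_isos:
  assumes x: "wf_graph x" and D: "wf_graph D" and C: "wf_graph C"
  shows "graph_iso (g_par (g_par x D) C) (g_par x (g_par D C))"
    and "graph_iso (g_par x (g_par D C)) (g_par (g_par x D) C)"
    and "graph_iso (g_par (g_par D x) C) (g_par x (g_par D C))"
    and "graph_iso (g_par x (g_par D C)) (g_par (g_par D x) C)"
proof -
  define X where "X = (\<lambda>k::nat. if k = 0 then x else if k = 1 then D else C)"
  have wX: "\<And>k. wf_graph (X k)" using x D C by (simp add: X_def)
  have gx: "isglue x {0} X" by (rule isglue_single) (simp_all add: X_def x)
  have gD: "isglue D {1} X" by (rule isglue_single) (simp_all add: X_def D)
  have gC: "isglue C {2} X" by (rule isglue_single) (simp_all add: X_def C)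
  have wxD: "wf_graph (g_par x D)" using wf_par[OF x D] .
  have wDx: "wf_graph (g_par D x)" using wf_par[OF D x] .
  have wDC: "wf_graph (g_par D C)" using wf_par[OF D C] .
  have g1: "isglue (g_par (g_par x D) C) (({0} \<union> {1}) \<union> {2}) X"
    by (rule isglue_par[OF isglue_par[OF gx gD _ x D wX] gC _ wxD C wX]) auto
  have g2: "isglue (g_par x (g_par D C)) ({0} \<union> ({1} \<union> {2})) X"
    by (rule isglue_par[OF gx isglue_par[OF gD gC _ D C wX] _ x wDC wX]) auto
  have g3: "isglue (g_par (g_par D x) C) (({1} \<union> {0}) \<union> {2}) X"
    by (rule isglue_par[OF isglue_par[OF gD gx _ D x wX] gC _ wDx C wX]) auto
  have k1: "({0} \<union> {1}) \<union> {2} = {0, 1, 2::nat}" by auto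
  have k2: "{0} \<union> ({1} \<union> {2}) = {0, 1, 2::nat}" by auto
  have k3: "({1} \<union> {0}) \<union> {2} = {0, 1, 2::nat}" by auto
  note g1' = g1[unfolded k1] and g2' = g2[unfolded k2] and g3' = g3[unfolded k3]
  show "graph_iso (g_par (g_par x D) C) (g_par x (g_par D C))" using isglue_iso[OF g1' g2' wX] .
  show "graph_iso (g_par x (g_par D C)) (g_par (g_par x D) C)" using isglue_iso[OF g2' g1' wX] .
  show "graph_iso (g_par (g_par D x) C) (g_par x (g_par D C))" using isglue_iso[OF g3' g2' wX] .
  show "graph_iso (g_par x (g_par D C)) (g_par (g_par D x) C)" using isglue_iso[OF g2' g3' wX] .
qed

lemma unit_isos:
  assumes A: "wf_graph A" and s: "gsort A = {}"
  shows "graph_iso A (g_restrict {} (g_par A (g_zero {})))"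
    and "graph_iso (g_restrict {} (g_par A (g_zero {}))) A"
proof -
  define X where "X = (\<lambda>k::nat. A)"
  have wX: "\<And>k. wf_graph (X k)" using A by (simp add: X_def)
  have g0: "isglue A {0} X" by (rule isglue_single) (simp_all add: X_def A)
  have w0: "wf_graph (g_zero {} :: ('a, 'b) sgraph)" by (rule wf_zero) simp
  have g1: "isglue (g_par A (g_zero {})) ({0} \<union> {}) X"
    by (rule isglue_par[OF g0 isglue_zero _ A w0 wX]) simp
  have "gsort (g_zero {} :: ('a, 'b) sgraph) = {}" by (simp add: gsort_def g_zero_def)
  then have "gsort (g_par A (g_zero {})) \<subseteq> {}" using s by (simp add: gsort_par)
  then have r: "g_restrict {} (g_par A (g_zero {})) = g_par A (g_zero {})" by (rule restrict_id)
  have g1': "isglue (g_restrict {} (g_par A (g_zero {}))) {0} X" using g1 unfolding r by simp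
  show "graph_iso A (g_restrict {} (g_par A (g_zero {})))" using isglue_iso[OF g0 g1' wX] .
  show "graph_iso (g_restrict {} (g_par A (g_zero {}))) A" using isglue_iso[OF g1' g0 wX] .
qed

definition ctxeq :: "('s::countable, 'a) sgraph set \<Rightarrow> ('s, 'a) sgraph \<Rightarrow> ('s, 'a) sgraph \<Rightarrow> bool" where
  "ctxeq L x y \<longleftrightarrow> wf_graph x \<and> wf_graph y \<and> gsort x = gsort y \<and>
     (\<forall>C. wf_graph C \<longrightarrow> (g_restrict {} (g_par x C) \<in> L \<longleftrightarrow> g_restrict {} (g_par y C) \<in> L))"

lemma ctxeq_refl: "wf_graph x \<Longrightarrow> ctxeq L x x"
  unfolding ctxeq_def by simp

lemma ctxeq_trans: "ctxeq L x y \<Longrightarrow> ctxeq L y z \<Longrightarrow> ctxeq L x z"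
  unfolding ctxeq_def by blast

lemma ctxeq_wf: "ctxeq L x y \<Longrightarrow> wf_graph x \<and> wf_graph y"
  unfolding ctxeq_def by blast

lemma ctxeq_restrict:
  assumes "ctxeq L x y" shows "ctxeq L (g_restrict \<sigma> x) (g_restrict \<sigma> y)"
proof -
  have h: "wf_graph x" "wf_graph y" "gsort x = gsort y"
    "\<And>C. wf_graph C \<Longrightarrow> (g_restrict {} (g_par x C) \<in> L \<longleftrightarrow> g_restrict {} (g_par y C) \<in> L)"
    using assms unfolding ctxeq_def by blast+
  show ?thesis unfolding ctxeq_def
  proof (intro conjI allI impI)
    show "wf_graph (g_restrict \<sigma> x)" "wf_graph (g_restrict \<sigma> y)" using h by (simp_all add: wf_restrict)
    show "gsort (g_restrict \<sigma> x) = gsort (g_restrict \<sigma> y)" using h by (simp add: gsort_restrict)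
    fix C :: "('a, 'b) sgraph" assume C: "wf_graph C"
    show "g_restrict {} (g_par (g_restrict \<sigma> x) C) \<in> L \<longleftrightarrow> g_restrict {} (g_par (g_restrict \<sigma> y) C) \<in> L"
      unfolding restr_par_eq using h(4)[OF wf_restrict[OF C]] .
  qed
qed

lemma ctxeq_rename:
  assumes "ctxeq L x y" "bij \<beta>" shows "ctxeq L (g_rename \<beta> x) (g_rename \<beta> y)"
proof -
  have h: "wf_graph x" "wf_graph y" "gsort x = gsort y"
    "\<And>C. wf_graph C \<Longrightarrow> (g_restrict {} (g_par x C) \<in> L \<longleftrightarrow> g_restrict {} (g_par y C) \<in> L)"
    using assms unfolding ctxeq_def by blast+
  have bi: "bij (inv \<beta>)" using assms(2) by (simp add: bij_imp_bij_inv)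
  show ?thesis unfolding ctxeq_def
  proof (intro conjI allI impI)
    show "wf_graph (g_rename \<beta> x)" "wf_graph (g_rename \<beta> y)" using h assms(2) by (simp_all add: wf_rename)
    show "gsort (g_rename \<beta> x) = gsort (g_rename \<beta> y)" using h by (simp add: gsort_rename)
    fix C :: "('a, 'b) sgraph" assume C: "wf_graph C"
    show "g_restrict {} (g_par (g_rename \<beta> x) C) \<in> L \<longleftrightarrow> g_restrict {} (g_par (g_rename \<beta> y) C) \<in> L"
      unfolding rename_par_eq[OF assms(2) h(1) C] rename_par_eq[OF assms(2) h(2) C]
      using h(4)[OF wf_rename[OF bi C]] .
  qed
qed

lemma ctxeq_par:
  assumes L: "iso_closed L" and xy: "ctxeq L x y" and D: "wf_graph D"
  shows "ctxeq L (g_par x D) (g_par y D)" and "ctxeq L (g_par D x) (g_par D y)"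
proof -
  have h: "wf_graph x" "wf_graph y" "gsort x = gsort y"
    "\<And>C. wf_graph C \<Longrightarrow> (g_restrict {} (g_par x C) \<in> L \<longleftrightarrow> g_restrict {} (g_par y C) \<in> L)"
    using xy unfolding ctxeq_def by blast+
  have e1: "g_restrict {} (g_par (g_par z D) C) \<in> L \<longleftrightarrow> g_restrict {} (g_par z (g_par D C)) \<in> L"
    if "wf_graph z" "wf_graph C" for z C
    using iso_L[OF L iso_restrict[OF assoc_isos(1)[OF that(1) D that(2)]] iso_restrict[OF assoc_isos(2)[OF that(1) D that(2)]]] .
  have e2: "g_restrict {} (g_par (g_par D z) C) \<in> L \<longleftrightarrow> g_restrict {} (g_par z (g_par D C)) \<in> L"
    if "wf_graph z" "wf_graph C" for z C
    using iso_L[OF L iso_restrict[OF assoc_isos(3)[OF that(1) D that(2)]] iso_restrict[OF assoc_isos(4)[OF that(1) D that(2)]]] .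
  show "ctxeq L (g_par x D) (g_par y D)" unfolding ctxeq_def
  proof (intro conjI allI impI)
    show "wf_graph (g_par x D)" "wf_graph (g_par y D)" using h D by (simp_all add: wf_par)
    show "gsort (g_par x D) = gsort (g_par y D)" using h by (simp add: gsort_par)
    fix C :: "('a, 'b) sgraph" assume C: "wf_graph C"
    show "g_restrict {} (g_par (g_par x D) C) \<in> L \<longleftrightarrow> g_restrict {} (g_par (g_par y D) C) \<in> L"
      using e1[OF h(1) C] e1[OF h(2) C] h(4)[OF wf_par[OF D C]] by blast
  qed
  show "ctxeq L (g_par D x) (g_par D y)" unfolding ctxeq_def
  proof (intro conjI allI impI)
    show "wf_graph (g_par D x)" "wf_graph (g_par D y)" using h D by (simp_all add: wf_par)
    show "gsort (g_par D x) = gsort (g_par D y)" using h by (simp add: gsort_par)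
    fix C :: "('a, 'b) sgraph" assume C: "wf_graph C"
    show "g_restrict {} (g_par (g_par D x) C) \<in> L \<longleftrightarrow> g_restrict {} (g_par (g_par D y) C) \<in> L"
      using e2[OF h(1) C] e2[OF h(2) C] h(4)[OF wf_par[OF D C]] by blast
  qed
qed

lemma ctxeq_eval:
  assumes L: "iso_closed L" and ab: "ctxeq L a b" and \<rho>: "\<And>i. wf_graph (\<rho> i)"
  shows "trm_ok UNIV t \<Longrightarrow> ctxeq L (eval (\<rho>(0 := a)) t) (eval (\<rho>(0 := b)) t)"
proof (induction t)
  case (TVar i)
  then show ?case using ab ctxeq_refl[OF \<rho>[of i]] by simp
next
  case (TZero \<sigma>)
  then show ?case by (simp add: ctxeq_refl wf_zero)
next
  case (TEdge a ss)
  then show ?case by (simp add: ctxeq_refl wf_edge)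
next
  case (TRestrict \<sigma> t)
  then show ?case by (simp add: ctxeq_restrict)
next
  case (TRename \<beta> t)
  then show ?case by (simp add: ctxeq_rename finite_perm_def)
next
  case (TPar t u)
  have t: "ctxeq L (eval (\<rho>(0 := a)) t) (eval (\<rho>(0 := b)) t)"
    by (rule TPar.IH(1)) (use TPar.prems in simp)
  have u: "ctxeq L (eval (\<rho>(0 := a)) u) (eval (\<rho>(0 := b)) u)"
    by (rule TPar.IH(2)) (use TPar.prems in simp)
  have w1: "wf_graph (eval (\<rho>(0 := a)) u)" using ctxeq_wf[OF u] by blast
  have w2: "wf_graph (eval (\<rho>(0 := b)) t)" using ctxeq_wf[OF t] by blast
  show ?case unfolding eval.simps by (rule ctxeq_trans[OF ctxeq_par(1)[OF L t w1] ctxeq_par(2)[OF L u w2]])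
qed

lemma ctxeq_final:
  assumes L: "iso_closed L" and Ls: "L \<subseteq> {G. wf_graph G \<and> gsort G = {}}" and AB: "ctxeq L A B"
  shows "A \<in> L \<longleftrightarrow> B \<in> L"
proof -
  have h: "wf_graph A" "wf_graph B" "gsort A = gsort B"
    "\<And>C. wf_graph C \<Longrightarrow> (g_restrict {} (g_par A C) \<in> L \<longleftrightarrow> g_restrict {} (g_par B C) \<in> L)"
    using AB unfolding ctxeq_def by blast+
  show ?thesis
  proof (cases "gsort A = {}")
    case True
    have sB: "gsort B = {}" using True h(3) by simp
    have w0: "wf_graph (g_zero {} :: ('a, 'b) sgraph)" by (rule wf_zero) simp
    have "A \<in> L \<longleftrightarrow> g_restrict {} (g_par A (g_zero {})) \<in> L"
      using iso_L[OF L unit_isos[OF h(1) True]] .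
    also have "\<dots> \<longleftrightarrow> g_restrict {} (g_par B (g_zero {})) \<in> L" using h(4)[OF w0] .
    also have "\<dots> \<longleftrightarrow> B \<in> L"
      using iso_L[OF L unit_isos(2)[OF h(2) sB] unit_isos(1)[OF h(2) sB]] .
    finally show ?thesis .
  next
    case False
    then have "A \<notin> L" "B \<notin> L" using Ls h(3) by auto
    then show ?thesis by simp
  qed
qed

theorem lemma7p3:
  fixes L :: "('s::countable, 'a) sgraph set" and \<tau> :: "'s set"
    and G1 G2 :: "('s, 'a) sgraph"
  assumes "infinite (UNIV :: 's set)"
    and "L \<subseteq> {G. wf_graph G \<and> gsort G = {}}" and "iso_closed L"
    and "finite \<tau>"
    and "wf_graph G1" and "wf_graph G2" and "gsort G1 \<subseteq> \<tau>" and "gsort G2 \<subseteq> \<tau>"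
  shows "G_cong L G1 G2 \<longleftrightarrow> Gtau_cong \<tau> L G1 G2"
proof
  assume "G_cong L G1 G2"
  then have h: "gsort G1 = gsort G2"
    "\<And>(t::('s, 'a) trm) \<rho>. trm_ok UNIV t \<Longrightarrow> (\<forall>i. wf_graph (\<rho> i)) \<Longrightarrow>
       (eval (\<rho>(0 := G1)) t \<in> L \<longleftrightarrow> eval (\<rho>(0 := G2)) t \<in> L)"
    unfolding G_cong_def syn_cong_def by auto
  show "Gtau_cong \<tau> L G1 G2"
    unfolding Gtau_cong_def syn_cong_def
    using assms(5-8) h(1) h(2)[OF trm_ok_mono] by auto
next
  assume "Gtau_cong \<tau> L G1 G2"
  then have h: "gsort G1 = gsort G2"
    "\<And>(t::('s, 'a) trm) \<rho>. trm_ok \<tau> t \<Longrightarrow> (\<forall>i. wf_graph (\<rho> i) \<and> gsort (\<rho> i) \<subseteq> \<tau>) \<Longrightarrow>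
       (eval (\<rho>(0 := G1)) t \<in> L \<longleftrightarrow> eval (\<rho>(0 := G2)) t \<in> L)"
    unfolding Gtau_cong_def syn_cong_def by auto
  have base: "ctxeq L G1 G2" unfolding ctxeq_def
  proof (intro conjI allI impI)
    show "wf_graph G1" "wf_graph G2" "gsort G1 = gsort G2" using assms(5,6) h(1) by simp_all
    fix C :: "('s, 'a) sgraph" assume C: "wf_graph C"
    define \<rho> where "\<rho> = (\<lambda>i::nat. if i = 1 then g_restrict \<tau> C else G1)"
    have r: "\<forall>i. wf_graph (\<rho> i) \<and> gsort (\<rho> i) \<subseteq> \<tau>"
      using assms(5,7) wf_restrict[OF C] by (simp add: \<rho>_def gsort_restrict)
    have t: "trm_ok \<tau> (TRestrict {} (TPar (TVar 0) (TVar 1)))" by simp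
    have e1: "g_restrict {} (g_par G1 C) = g_restrict {} (g_par G1 (g_restrict \<tau> C))"
      using restr_par_eq[of \<tau> G1 C] restrict_id[OF assms(7)] by simp
    have e2: "g_restrict {} (g_par G2 C) = g_restrict {} (g_par G2 (g_restrict \<tau> C))"
      using restr_par_eq[of \<tau> G2 C] restrict_id[OF assms(8)] by simp
    show "g_restrict {} (g_par G1 C) \<in> L \<longleftrightarrow> g_restrict {} (g_par G2 C) \<in> L"
      using h(2)[OF t r] unfolding e1 e2 by (simp add: \<rho>_def)
  qed
  show "G_cong L G1 G2"
    unfolding G_cong_def syn_cong_def
  proof (intro conjI allI impI)
    show "G1 \<in> {G. wf_graph G}" "G2 \<in> {G. wf_graph G}" "gsort G1 = gsort G2" using assms(5,6) h(1) by simp_all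
    fix t :: "('s, 'a) trm" and \<rho> :: "nat \<Rightarrow> ('s, 'a) sgraph"
    assume a: "trm_ok UNIV t \<and> (\<forall>i. \<rho> i \<in> {G. wf_graph G})"
    then have "ctxeq L (eval (\<rho>(0 := G1)) t) (eval (\<rho>(0 := G2)) t)"
      using ctxeq_eval[OF assms(3) base] by auto
    then show "eval (\<rho>(0 := G1)) t \<in> L \<longleftrightarrow> eval (\<rho>(0 := G2)) t \<in> L"
      by (rule ctxeq_final[OF assms(3) assms(2)])
  qed
qed

end
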